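(* The sub-set-operad of $\mathrm{RWS}$ generated by $A_\mu$, $A_\prec$, $A_\succ$ consists exactly of the recursively labelled red and white trees having no node with empty label set.
   Context: Red and white trees: $\mathrm{RW}(n)$ is the set of finite rooted trees (children unordered) whose nodes $z$ carry possibly empty label sets $L(z)\subseteq[n]$ partitioning $[n]$, each empty node having at least two children; labelled nodes are white, an empty node is red iff all its children are white. Composition $T_1\circ_xT_2$ ($T_1\in\mathrm{RW}(m)$, $T_2\in\mathrm{RW}(n)$): relabel $T_1$ by $y\mapsto y+n-1$ for $y>x$ and $T_2$ by $y\mapsto y+x-1$; $z\ni x$ in $T_1$, $r$ = root of $T_2$. (W) $r$ not red: remove $x$ from $L(z)$, add $L(r)$ to $L(z)$, children of $r$ become children of $z$. (R1) $r$ red, $T_1$ the single node $\{x\}$: result $T_2$. (R2) $r$ red and ($z$ has a child or $|L(z)|\ge2$): remove $x$ from $L(z)$, attach $T_2$ as child subtree of $z$. (R3) $r$ red, $z$ non-root leaf with $L(z)=\{x\}$: delete $z$, children of $r$ become children of the parent of $z$. Colours recomputed. A tree is recursively labelled if for each node the union of label sets in its subtree is an interval of integers. $\mathrm{RWS}$ is the sub-set-operad generated by $A_\mu$ (single node $\{1,2\}$), $A_\prec$ (root $\{1\}$ with child $\{2\}$), $A_\succ$ (root $\{2\}$ with child $\{1\}$), $A_\odot$ (empty red root with children $\{1\},\{2\}$). *)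

theory Defs
  imports Main "HOL-Library.Multiset"
begin

text \<open>Red and white trees: finite rooted trees with unordered children (a multiset of
  subtrees); each node carries a (possibly empty) label set.\<close>

datatype rwt = Node (lbl: "nat set") (kids: "rwt multiset")

primrec subtrees :: "rwt \<Rightarrow> rwt multiset" where
  "subtrees (Node L C) = add_mset (Node L C) (\<Sum>\<^sub># (image_mset subtrees C))"

primrec labels :: "rwt \<Rightarrow> nat set" where
  "labels (Node L C) = L \<union> \<Union> (set_mset (image_mset labels C))"

definition RW :: "nat \<Rightarrow> rwt set" where
  "RW n = {T. (\<forall>S \<in># subtrees T. finite (lbl S) \<and> (lbl S = {} \<longrightarrow> 2 \<le> size (kids S)))
              \<and> \<Sum>\<^sub># (image_mset (\<lambda>S. mset_set (lbl S)) (subtrees T)) = mset_set {1..n}}"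

definition white :: "rwt \<Rightarrow> bool" where
  "white T \<longleftrightarrow> lbl T \<noteq> {}"

definition red :: "rwt \<Rightarrow> bool" where
  "red T \<longleftrightarrow> lbl T = {} \<and> (\<forall>c \<in># kids T. white c)"

primrec relabel :: "(nat \<Rightarrow> nat) \<Rightarrow> rwt \<Rightarrow> rwt" where
  "relabel f (Node L C) = Node (f ` L) (image_mset (relabel f) C)"

text \<open>Grafting at a non-root node: result is the multiset of trees replacing that node
  among the children of its parent (rules W, R2, R3).  Here T2 is the (already relabelled)
  second tree and x the (relabelled) grafting label.\<close>
primrec graft :: "nat \<Rightarrow> rwt \<Rightarrow> rwt \<Rightarrow> rwt multiset" where
  "graft x T2 (Node L C) =
     (if x \<in> L then
        (if \<not> red T2 then {# Node ((L - {x}) \<union> lbl T2) (C + kids T2) #}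
         else if C \<noteq> {#} \<or> 2 \<le> card L then {# Node (L - {x}) (add_mset T2 C) #}
         else kids T2)
      else {# Node L (\<Sum>\<^sub># (image_mset (graft x T2) C)) #})"

fun graft_root :: "nat \<Rightarrow> rwt \<Rightarrow> rwt \<Rightarrow> rwt" where
  "graft_root x T2 (Node L C) =
     (if x \<in> L then
        (if \<not> red T2 then Node ((L - {x}) \<union> lbl T2) (C + kids T2)
         else if C \<noteq> {#} \<or> 2 \<le> card L then Node (L - {x}) (add_mset T2 C)
         else T2)
      else Node L (\<Sum>\<^sub># (image_mset (graft x T2) C)))"

text \<open>Partial composition T1 o_x T2 where T2 has arity n.\<close>
definition rw_comp :: "nat \<Rightarrow> nat \<Rightarrow> rwt \<Rightarrow> rwt \<Rightarrow> rwt" where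
  "rw_comp n x T1 T2 =
     graft_root x (relabel (\<lambda>y. y + x - 1) T2)
                  (relabel (\<lambda>y. if x < y then y + n - 1 else y) T1)"

definition A_unit :: rwt where "A_unit = Node {1} {#}"
definition A_mu :: rwt where "A_mu = Node {1, 2} {#}"
definition A_prec :: rwt where "A_prec = Node {1} {# Node {2} {#} #}"
definition A_succ :: rwt where "A_succ = Node {2} {# Node {1} {#} #}"
definition A_odot :: rwt where "A_odot = Node {} {# Node {1} {#}, Node {2} {#} #}"

text \<open>Sub-(non-symmetric) set-operad generated by a family of generators G (arity, tree):
  contains the unit and the generators, closed under partial compositions.\<close>
inductive gen_by :: "(nat \<times> rwt) set \<Rightarrow> nat \<Rightarrow> rwt \<Rightarrow> bool" for G where
  unit: "gen_by G 1 A_unit"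
| gen: "(k, T) \<in> G \<Longrightarrow> gen_by G k T"
| comp: "gen_by G m T1 \<Longrightarrow> gen_by G n T2 \<Longrightarrow> 1 \<le> x \<Longrightarrow> x \<le> m
          \<Longrightarrow> gen_by G (m + n - 1) (rw_comp n x T1 T2)"

abbreviation RWS :: "nat \<Rightarrow> rwt \<Rightarrow> bool" where
  "RWS \<equiv> gen_by {(2, A_mu), (2, A_prec), (2, A_succ), (2, A_odot)}"

definition rec_labelled :: "rwt \<Rightarrow> bool" where
  "rec_labelled T \<longleftrightarrow> (\<forall>S \<in># subtrees T. \<exists>a b. labels S = {a..b})"

end

theory Submission
  imports Defs
begin

lemma image_mset_Sum: "image_mset f (\<Sum>\<^sub># M) = \<Sum>\<^sub># (image_mset (image_mset f) M)"
  by (induction M) auto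

lemma Sum_Sum: "\<Sum>\<^sub># (image_mset g (\<Sum>\<^sub># M)) = \<Sum>\<^sub># (image_mset (\<lambda>X. \<Sum>\<^sub># (image_mset g X)) M)"
  by (induction M) auto

definition LM :: "rwt \<Rightarrow> nat multiset" where
  "LM T = \<Sum>\<^sub># (image_mset (\<lambda>S. mset_set (lbl S)) (subtrees T))"

lemma LM_Node: "LM (Node L C) = mset_set L + \<Sum>\<^sub># (image_mset LM C)"
  unfolding LM_def by (simp add: Sum_Sum image_mset.compositionality comp_def)

lemma labels_Node: "labels (Node L C) = L \<union> (\<Union>c\<in>set_mset C. labels c)" by simp

lemma subtrees_self: "T \<in># subtrees T" by (cases T) auto

lemma subtrees_kid: "c \<in># kids T \<Longrightarrow> S \<in># subtrees c \<Longrightarrow> S \<in># subtrees T"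
  by (cases T) auto

lemma subtrees_trans: "S \<in># subtrees T \<Longrightarrow> U \<in># subtrees S \<Longrightarrow> U \<in># subtrees T"
proof (induction T)
  case (Node L C)
  show ?case
  proof (cases "S = Node L C")
    case True then show ?thesis using Node.prems by simp
  next
    case False
    then obtain c where c: "c \<in># C" "S \<in># subtrees c" using Node.prems(1) by auto
    then have "U \<in># subtrees c" using Node.IH[OF c(1) c(2) Node.prems(2)] by simp
    then show ?thesis using c by auto
  qed
qed

lemma subtrees_Node_iff: "S \<in># subtrees (Node L C) \<longleftrightarrow> S = Node L C \<or> (\<exists>c\<in>#C. S \<in># subtrees c)"
  by auto

lemma lbl_sub_labels: "lbl T \<subseteq> labels T" by (cases T) auto

lemma labels_sub: "S \<in># subtrees T \<Longrightarrow> labels S \<subseteq> labels T"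
  by (induction T) (auto)

lemma set_LM: "(\<forall>S\<in>#subtrees T. finite (lbl S)) \<Longrightarrow> set_mset (LM T) = labels T"
proof (induction T)
  case (Node L C)
  have "\<And>c. c \<in># C \<Longrightarrow> set_mset (LM c) = labels c"
    using Node by auto
  moreover have "finite L" using Node.prems by auto
  ultimately show ?case by (auto simp: LM_Node)
qed


lemma relabel_comp: "relabel f (relabel g T) = relabel (f \<circ> g) T"
  by (induction T) (auto simp: image_mset.compositionality image_comp intro!: image_mset_cong)

lemma relabel_cong: "(\<forall>y\<in>labels T. f y = g y) \<Longrightarrow> relabel f T = relabel g T"
proof (induction T)
  case (Node L C)
  then show ?case by (auto intro!: image_mset_cong)
qed

lemma relabel_id: "(\<forall>y\<in>labels T. f y = y) \<Longrightarrow> relabel f T = T"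
proof (induction T)
  case (Node L C)
  then have "image_mset (relabel f) C = C"
    by (auto intro: image_mset_cong[where g=id, simplified])
  with Node show ?case by auto
qed

lemma lbl_relabel[simp]: "lbl (relabel f T) = f ` lbl T" by (cases T) auto
lemma kids_relabel[simp]: "kids (relabel f T) = image_mset (relabel f) (kids T)" by (cases T) auto
lemma labels_relabel[simp]: "labels (relabel f T) = f ` labels T"
  by (induction T) (auto simp: image_Union)

lemma subtrees_relabel: "subtrees (relabel f T) = image_mset (relabel f) (subtrees T)"
  by (induction T) (auto simp: image_mset_Sum image_mset.compositionality comp_def intro!: arg_cong[where f=sum_mset] image_mset_cong)

lemma LM_relabel: "inj_on f (labels T) \<Longrightarrow> (\<forall>S\<in>#subtrees T. finite (lbl S)) \<Longrightarrow>
   LM (relabel f T) = image_mset f (LM T)"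
proof (induction T)
  case (Node L C)
  have IH: "\<And>c. c \<in># C \<Longrightarrow> LM (relabel f c) = image_mset f (LM c)"
    using Node by (auto intro: inj_on_subset)
  have "inj_on f L" using Node.prems by (auto intro: inj_on_subset)
  then have "mset_set (f ` L) = image_mset f (mset_set L)" by (simp add: image_mset_mset_set)
  moreover have "LM (Node L C) = mset_set L + \<Sum>\<^sub># (image_mset LM C)" by (rule LM_Node)
  moreover have "LM (relabel f (Node L C)) = mset_set (f ` L) + \<Sum>\<^sub># (image_mset LM (image_mset (relabel f) C))"
    by (simp add: LM_Node)
  moreover have "image_mset LM (image_mset (relabel f) C) = image_mset (\<lambda>c. image_mset f (LM c)) C"
    using IH by (auto simp: image_mset.compositionality intro!: image_mset_cong)
  ultimately show ?case
    by (simp add: image_mset_Sum image_mset.compositionality comp_def)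
qed


lemma count_Sum: "count (\<Sum>\<^sub># M) z = (\<Sum>X\<in>#M. count X z)"
  by (induction M) auto

lemma count_LM_Node: "count (LM (Node L C)) z = count (mset_set L) z + (\<Sum>c\<in>#C. count (LM c) z)"
  by (simp add: LM_Node count_Sum image_mset.compositionality comp_def)

lemma sum_mset_member_le: "c \<in># C \<Longrightarrow> (f c :: nat) \<le> (\<Sum>c\<in>#C. f c)"
proof -
  assume "c \<in># C"
  then obtain C' where "C = add_mset c C'" by (metis multi_member_split)
  then show ?thesis by simp
qed

lemma count_LM_kid: "c \<in># C \<Longrightarrow> count (LM c) z \<le> count (LM (Node L C)) z"
  using sum_mset_member_le[of c C "\<lambda>c. count (LM c) z"] by (simp add: count_LM_Node)

lemma count_LM_sub: "S \<in># subtrees T \<Longrightarrow> count (LM S) z \<le> count (LM T) z"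
proof (induction T)
  case (Node L C)
  show ?case
  proof (cases "S = Node L C")
    case True then show ?thesis by simp
  next
    case False
    then obtain c where c: "c \<in># C" "S \<in># subtrees c" using Node.prems by auto
    then show ?thesis using Node.IH[OF c] count_LM_kid[OF c(1), of z L] by simp
  qed
qed

lemma fin_kid: "\<forall>S\<in>#subtrees (Node L C). P S \<Longrightarrow> c \<in># C \<Longrightarrow> \<forall>S\<in>#subtrees c. P S"
  by auto

lemma in_labels_LM: "\<forall>S\<in>#subtrees T. finite (lbl S) \<Longrightarrow> z \<in> labels T \<Longrightarrow> 1 \<le> count (LM T) z"
  using set_LM[of T] by (metis One_nat_def Suc_leI count_greater_zero_iff)

lemma notin_labels_LM: "\<forall>S\<in>#subtrees T. finite (lbl S) \<Longrightarrow> count (LM T) z = 0 \<Longrightarrow> z \<notin> labels T"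
  using in_labels_LM by fastforce

primrec wgraft :: "nat \<Rightarrow> rwt \<Rightarrow> rwt \<Rightarrow> rwt" where
  "wgraft x B (Node L C) = (if x \<in> L then Node ((L - {x}) \<union> lbl B) (C + kids B)
      else Node L (image_mset (wgraft x B) C))"

lemma graft_w: "\<not> red B \<Longrightarrow> graft x B T = {# wgraft x B T #}"
proof (induction T)
  case (Node L C)
  then have "(\<Sum>\<^sub># (image_mset (graft x B) C)) = image_mset (wgraft x B) C"
    by (simp cong: image_mset_cong)
  with Node show ?case by simp
qed

lemma graft_root_w: "\<not> red B \<Longrightarrow> graft_root x B T = wgraft x B T"
  by (cases T) (simp add: graft_w cong: image_mset_cong)

lemma rw_comp_w: "lbl T2 \<noteq> {} \<Longrightarrow> rw_comp n x T1 T2 =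
   wgraft x (relabel (\<lambda>y. y + x - 1) T2) (relabel (\<lambda>y. if x < y then y + n - 1 else y) T1)"
  unfolding rw_comp_def by (rule graft_root_w) (simp add: red_def)

lemma wgraft_id: "x \<notin> labels T \<Longrightarrow> wgraft x B T = T"
proof (induction T)
  case (Node L C)
  then have "image_mset (wgraft x B) C = C"
    by (auto intro: image_mset_cong[where g=id, simplified])
  with Node show ?case by auto
qed

lemma lbl_wgraft: "lbl (wgraft x B T) = (if x \<in> lbl T then (lbl T - {x}) \<union> lbl B else lbl T)"
  by (cases T) auto

lemma labels_kids: "labels B = lbl B \<union> (\<Union>c\<in>set_mset (kids B). labels c)"
  by (cases B) auto

lemma labels_wgraft: "x \<in> labels B \<Longrightarrow>
   labels (wgraft x B T) = (if x \<in> labels T then labels T \<union> labels B else labels T)"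
proof (induction T)
  case (Node L C)
  show ?case
  proof (cases "x \<in> L")
    case True
    then show ?thesis using Node.prems labels_kids[of B] by auto
  next
    case False
    have "labels (wgraft x B (Node L C)) = L \<union> (\<Union>c\<in>set_mset C. labels (wgraft x B c))"
      using False by simp
    also have "\<dots> = L \<union> (\<Union>c\<in>set_mset C. (if x \<in> labels c then labels c \<union> labels B else labels c))"
      using Node by simp
    finally show ?thesis using False Node.prems by auto
  qed
qed


lemma notin_kid_labels:
  assumes fin: "\<forall>S\<in>#subtrees (Node L C). finite (lbl S)"
    and d: "count (LM (Node L C)) x \<le> 1" and xL: "x \<in> L" and c: "c \<in># C"
  shows "x \<notin> labels c"
proof
  assume "x \<in> labels c"
  then have "1 \<le> count (LM c) x" using in_labels_LM fin c by auto
  moreover have "count (mset_set L) x = 1" using fin xL by auto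
  moreover have "count (LM c) x \<le> (\<Sum>c\<in>#C. count (LM c) x)" using sum_mset_member_le[OF c] .
  moreover have "count (LM (Node L C)) x = count (mset_set L) x + (\<Sum>c\<in>#C. count (LM c) x)"
    by (rule count_LM_Node)
  ultimately show False using d by linarith
qed

lemma sub_wg:
  "\<forall>S\<in>#subtrees T. finite (lbl S) \<Longrightarrow> count (LM T) x \<le> 1 \<Longrightarrow> S' \<in># subtrees (wgraft x B T) \<Longrightarrow>
   (\<exists>S\<in>#subtrees T. x \<in> labels S \<and> S' = wgraft x B S) \<or> (S' \<in># subtrees T \<and> x \<notin> labels S')
   \<or> S' \<in># subtrees B"
proof (induction T arbitrary: S')
  case (Node L C)
  show ?case
  proof (cases "x \<in> L")
    case True
    have w: "wgraft x B (Node L C) = Node ((L - {x}) \<union> lbl B) (C + kids B)" using True by simp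
    show ?thesis
    proof (cases "S' = wgraft x B (Node L C)")
      case True
      then show ?thesis using \<open>x \<in> L\<close> subtrees_self[of "Node L C"] by auto
    next
      case False
      then obtain c where c: "c \<in># C + kids B" "S' \<in># subtrees c" using Node.prems(3) w by auto
      show ?thesis
      proof (cases "c \<in># C")
        case True
        then have "x \<notin> labels c" using notin_kid_labels Node.prems \<open>x \<in> L\<close> by blast
        then have "x \<notin> labels S'" using labels_sub[OF c(2)] by auto
        then show ?thesis using c True by auto
      next
        case False
        then have "c \<in># kids B" using c by auto
        then show ?thesis using c subtrees_kid by blast
      qed
    qed
  next
    case False
    have w: "wgraft x B (Node L C) = Node L (image_mset (wgraft x B) C)" using False by simp
    show ?thesis
    proof (cases "S' = wgraft x B (Node L C)")
      case True
      show ?thesis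
      proof (cases "x \<in> labels (Node L C)")
        case True
        then show ?thesis using \<open>S' = _\<close> subtrees_self[of "Node L C"] by blast
      next
        case False
        then show ?thesis using \<open>S' = _\<close> wgraft_id[OF False] subtrees_self[of "Node L C"] by auto
      qed
    next
      case False
      then obtain c where c: "c \<in># C" "S' \<in># subtrees (wgraft x B c)" using Node.prems(3) w by auto
      have "count (LM c) x \<le> 1" using count_LM_kid[OF c(1), of x L] Node.prems(2) by simp
      then have "(\<exists>S\<in>#subtrees c. x \<in> labels S \<and> S' = wgraft x B S) \<or> (S' \<in># subtrees c \<and> x \<notin> labels S')
        \<or> S' \<in># subtrees B" using Node.IH[OF c(1) _ _ c(2)] Node.prems(1) c(1) by auto
      then show ?thesis using c(1) by auto
    qed
  qed
qed



lemma LM_B: "LM B = mset_set (lbl B) + \<Sum>\<^sub># (image_mset LM (kids B))"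
  by (cases B) (simp add: LM_Node)

lemma LM_wg:
  "\<forall>S\<in>#subtrees T. finite (lbl S) \<Longrightarrow> finite (lbl B) \<Longrightarrow> count (LM T) x = 1 \<Longrightarrow>
   labels T \<inter> labels B \<subseteq> {x} \<Longrightarrow> LM (wgraft x B T) + {#x#} = LM T + LM B"
proof (induction T)
  case (Node L C)
  show ?case
  proof (cases "x \<in> L")
    case True
    have fL: "finite L" using Node.prems(1) by simp
    have disj: "(L - {x}) \<inter> lbl B = {}" using Node.prems(4) lbl_sub_labels[of B] by auto
    have e1: "mset_set ((L - {x}) \<union> lbl B) = mset_set (L - {x}) + mset_set (lbl B)"
      using mset_set_Union[OF _ Node.prems(2) disj] fL by simp
    have e2: "mset_set (L - {x}) + {#x#} = mset_set L"
      using mset_set.remove[OF fL True] by simp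
    have w: "wgraft x B (Node L C) = Node ((L - {x}) \<union> lbl B) (C + kids B)" using True by simp
    have "LM (wgraft x B (Node L C)) = mset_set ((L - {x}) \<union> lbl B) + \<Sum>\<^sub># (image_mset LM C) + \<Sum>\<^sub># (image_mset LM (kids B))"
      unfolding w LM_Node by simp
    then show ?thesis using e1 e2 LM_B[of B] LM_Node[of L C] by (simp add: ac_simps)
  next
    case False
    have s1: "(\<Sum>c\<in>#C. count (LM c) x) = 1" using Node.prems(3) False count_LM_Node[of L C x] by simp
    have "\<exists>c0. c0 \<in># C \<and> count (LM c0) x \<noteq> 0"
    proof (rule ccontr)
      assume "\<not> (\<exists>c0. c0 \<in># C \<and> count (LM c0) x \<noteq> 0)"
      then have "(\<Sum>c\<in>#C. count (LM c) x) = 0" by (auto simp: sum_mset_0_iff count_eq_zero_iff)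
      then show False using s1 by simp
    qed
    then obtain c0 where c0: "c0 \<in># C" "count (LM c0) x \<noteq> 0" by blast
    obtain C' where C': "C = add_mset c0 C'" using c0 by (metis multi_member_split)
    have s2: "count (LM c0) x + (\<Sum>c\<in>#C'. count (LM c) x) = 1"
      using s1 C' by simp
    have c01: "count (LM c0) x = 1" using s2 c0(2) by arith
    have C'0: "(\<Sum>c\<in>#C'. count (LM c) x) = 0" using s2 c01 by arith
    have finC: "\<forall>S\<in>#subtrees c. finite (lbl S)" if "c \<in># C" for c
      using Node.prems(1) that by auto
    have "x \<notin> labels c" if "c \<in># C'" for c
    proof -
      have "count (LM c) x = 0" using C'0 sum_mset_member_le[OF that, of "\<lambda>c. count (LM c) x"] by linarith
      moreover have "c \<in># C" using C' that by simp
      then have "\<forall>S\<in>#subtrees c. finite (lbl S)" by (rule finC)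
      ultimately show "x \<notin> labels c" using notin_labels_LM by blast
    qed
    then have idC': "image_mset (wgraft x B) C' = C'"
      by (auto intro: image_mset_cong[where g=id, simplified] wgraft_id)
    have lc0: "labels c0 \<inter> labels B \<subseteq> {x}" using Node.prems(4) c0(1) by auto
    have IH: "LM (wgraft x B c0) + {#x#} = LM c0 + LM B"
      by (rule Node.IH[OF c0(1) finC[OF c0(1)] Node.prems(2) c01 lc0])
    have w: "wgraft x B (Node L C) = Node L (add_mset (wgraft x B c0) C')" using False C' idC' by simp
    show ?thesis unfolding w LM_Node using IH C' by (simp add: ac_simps)
  qed
qed



lemma F1:
  fixes x n m :: nat
  assumes "1 \<le> n" "x \<le> m"
  shows "(\<lambda>y. if x < y then y + n - 1 else y) ` {a..b} =
         {a..min b x} \<union> {max a (x+1) + n - 1 .. b + n - 1}"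
  (is "?f ` _ = ?R")
proof
  show "?f ` {a..b} \<subseteq> ?R" using assms by auto
  show "?R \<subseteq> ?f ` {a..b}"
  proof
    fix y assume "y \<in> ?R"
    then consider "a \<le> y" "y \<le> b" "y \<le> x" | "max a (x+1) + n - 1 \<le> y" "y \<le> b + n - 1" by auto
    then show "y \<in> ?f ` {a..b}"
    proof cases
      case 1 then show ?thesis by (intro image_eqI[of _ _ y]) auto
    next
      case 2 then show ?thesis using assms by (intro image_eqI[of _ _ "y + 1 - n"]) auto
    qed
  qed
qed

lemma I1:
  fixes x n :: nat
  assumes "1 \<le> n" "a \<le> x" "x \<le> b"
  shows "(\<lambda>y. if x < y then y + n - 1 else y) ` {a..b} \<union> {x..x+n-1} = {a..b+n-1}"
proof -
  have e: "(\<lambda>y. if x < y then y + n - 1 else y) ` {a..b} =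
         {a..min b x} \<union> {max a (x+1) + n - 1 .. b + n - 1}"
    by (rule F1[where x=x and n=n and m=x and a=a and b=b]) (use assms in auto)
  have "min b x = x" "max a (x+1) = x + 1" using assms by auto
  then have "(\<lambda>y. if x < y then y + n - 1 else y) ` {a..b} = {a..x} \<union> {x + n .. b + n - 1}"
    using e by simp
  then show ?thesis using assms by auto
qed

lemma I2:
  fixes x n :: nat
  assumes "1 \<le> n" "x \<notin> (\<lambda>y. if x < y then y + n - 1 else y) ` {a..b}"
  shows "\<exists>a' b'. (\<lambda>y. if x < y then y + n - 1 else y) ` {a..b} = {a'..b'}"
proof -
  have "x \<notin> {a..b}" using assms(2) by force
  then consider "b < x" | "x < a" | "b < a" by force
  then show ?thesis
  proof cases
    case 1
    then have "(\<lambda>y. if x < y then y + n - 1 else y) ` {a..b} = {a..b}" by (auto intro!: image_eqI)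
    then show ?thesis by blast
  next
    case 2
    have e: "(\<lambda>y. if x < y then y + n - 1 else y) ` {a..b} =
         {a..min b x} \<union> {max a (x+1) + n - 1 .. b + n - 1}"
      by (rule F1[where x=x and n=n and m=x and a=a and b=b]) (use assms in auto)
    have "{a..min b x} = {}" "max a (x+1) = a" using 2 by auto
    then have "(\<lambda>y. if x < y then y + n - 1 else y) ` {a..b} = {a+n-1..b+n-1}" using e by simp
    then show ?thesis by blast
  next
    case 3 then show ?thesis by auto
  qed
qed

lemma I3:
  fixes x :: nat assumes "1 \<le> x"
  shows "(\<lambda>y. y + x - 1) ` {a..b} = {a+x-1..b+x-1}"
proof -
  have "(\<lambda>y. y + x - 1) = (\<lambda>y. y + (x - 1))" using assms by auto
  then show ?thesis using image_add_atLeastAtMost[of "x - 1" a b] assms by (simp add: add.commute)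
qed



definition fin :: "rwt \<Rightarrow> bool" where "fin T \<longleftrightarrow> (\<forall>S\<in>#subtrees T. finite (lbl S))"
definition wh :: "rwt \<Rightarrow> bool" where "wh T \<longleftrightarrow> (\<forall>S\<in>#subtrees T. lbl S \<noteq> {})"
definition P :: "nat \<Rightarrow> rwt \<Rightarrow> bool" where
  "P n T \<longleftrightarrow> fin T \<and> wh T \<and> LM T = mset_set {1..n} \<and> rec_labelled T"

lemma P_iff: "(T \<in> RW n \<and> rec_labelled T \<and> (\<forall>S \<in># subtrees T. lbl S \<noteq> {})) \<longleftrightarrow> P n T"
  unfolding P_def RW_def fin_def wh_def LM_def by auto

lemma LM_nonempty: "fin T \<Longrightarrow> wh T \<Longrightarrow> LM T \<noteq> {#}"
  using set_LM[of T] lbl_sub_labels[of T] subtrees_self[of T]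
  unfolding fin_def wh_def by (metis set_mset_empty subset_empty)

lemma P_pos: "P n T \<Longrightarrow> 1 \<le> n"
  using LM_nonempty unfolding P_def by (cases n) auto

lemma labels_P: "P n T \<Longrightarrow> labels T = {1..n}"
  using set_LM[of T] unfolding P_def fin_def by auto

lemma comp_P:
  assumes P1: "P m T1" and P2: "P n T2" and x: "1 \<le> x" "x \<le> m"
  shows "P (m + n - 1) (rw_comp n x T1 T2)"
proof -
  define f where "f = (\<lambda>y. if x < y then y + n - 1 else (y::nat))"
  define g where "g = (\<lambda>y. y + x - (1::nat))"
  define A where "A = relabel f T1"
  define B where "B = relabel g T2"
  have n1: "1 \<le> n" using P_pos[OF P2] .
  have injf: "inj f" unfolding f_def inj_def using n1 by (auto split: if_splits)
  have injg: "inj g" unfolding g_def inj_def using x by auto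
  have wh2: "lbl T2 \<noteq> {}" using P2 subtrees_self[of T2] unfolding P_def wh_def by auto
  have R: "rw_comp n x T1 T2 = wgraft x B A"
    unfolding A_def B_def f_def g_def by (rule rw_comp_w[OF wh2])
  have fA: "fin A" and fB: "fin B" using P1 P2 unfolding A_def B_def P_def fin_def
    by (auto simp: subtrees_relabel)
  have whA: "wh A" and whB: "wh B" using P1 P2 unfolding A_def B_def P_def wh_def
    by (auto simp: subtrees_relabel)
  have labA: "labels A = f ` {1..m}" using labels_P[OF P1] unfolding A_def by simp
  have labB: "labels B = g ` {1..n}" using labels_P[OF P2] unfolding B_def by simp
  have F1': "f ` {1..m} = {1..x} \<union> {x + n .. m + n - 1}"
  proof -
    have e: "f ` {1..m} = {1..min m x} \<union> {max 1 (x+1) + n - 1 .. m + n - 1}"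
      unfolding f_def by (rule F1) (use n1 x in auto)
    have "min m x = x" "max 1 (x+1) + n - 1 = x + n" using x n1 by auto
    then show ?thesis using e by simp
  qed
  have G1: "g ` {1..n} = {x .. x + n - 1}" unfolding g_def using I3[OF x(1), of 1 n] by (simp add: add.commute)
  have LMA: "LM A = mset_set (f ` {1..m})"
    unfolding A_def using LM_relabel[of f T1] P1 injf
    by (simp add: P_def fin_def image_mset_mset_set inj_on_subset)
  have LMB: "LM B = mset_set (g ` {1..n})"
    unfolding B_def using LM_relabel[of g T2] P2 injg
    by (simp add: P_def fin_def image_mset_mset_set inj_on_subset)
  have xA: "count (LM A) x = 1" using LMA F1' x by simp
  have xB: "x \<in> labels B" using labB G1 n1 by auto
  have disj: "labels A \<inter> labels B \<subseteq> {x}" using labA labB F1' G1 by auto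
  have finlB: "finite (lbl B)" using fB subtrees_self[of B] unfolding fin_def by auto
  have LMR: "LM (wgraft x B A) + {#x#} = LM A + LM B"
    by (rule LM_wg) (use fA finlB xA disj in \<open>auto simp: fin_def\<close>)
  have LMR': "LM (wgraft x B A) = mset_set {1..m + n - 1}"
  proof (rule multiset_eqI)
    fix y
    have "count (LM (wgraft x B A)) y + count {#x#} y = count (LM A) y + count (LM B) y"
      using LMR by (metis count_union)
    then show "count (LM (wgraft x B A)) y = count (mset_set {1..m + n - 1}) y"
      using LMA LMB F1' G1 x n1 by (auto simp: count_mset_set' split: if_splits)
  qed
  have subs: "\<And>S'. S' \<in># subtrees (wgraft x B A) \<Longrightarrow>
     (\<exists>S\<in>#subtrees A. x \<in> labels S \<and> S' = wgraft x B S) \<or> (S' \<in># subtrees A \<and> x \<notin> labels S')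
     \<or> S' \<in># subtrees B"
    by (rule sub_wg) (use fA xA in \<open>auto simp: fin_def\<close>)
  have lblB: "lbl B \<noteq> {}" using whB subtrees_self[of B] unfolding wh_def by auto
  have finR: "fin (wgraft x B A)" unfolding fin_def
  proof
    fix S' assume "S' \<in># subtrees (wgraft x B A)"
    from subs[OF this] show "finite (lbl S')"
      using fA fB finlB unfolding fin_def by (auto simp: lbl_wgraft)
  qed
  have whR: "wh (wgraft x B A)" unfolding wh_def
  proof
    fix S' assume "S' \<in># subtrees (wgraft x B A)"
    from subs[OF this] show "lbl S' \<noteq> {}"
      using whA whB lblB unfolding wh_def by (auto simp: lbl_wgraft split: if_splits)
  qed
  have recA: "\<forall>S\<in>#subtrees A. \<exists>a b. labels S = f ` {a..b}"
    using P1 unfolding A_def P_def rec_labelled_def by (fastforce simp: subtrees_relabel)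
  have recB: "\<forall>S\<in>#subtrees B. \<exists>a b. labels S = g ` {a..b}"
    using P2 unfolding B_def P_def rec_labelled_def by (fastforce simp: subtrees_relabel)
  have recR: "rec_labelled (wgraft x B A)" unfolding rec_labelled_def
  proof
    fix S' assume S': "S' \<in># subtrees (wgraft x B A)"
    from subs[OF this] consider
        (a) S where "S \<in># subtrees A" "x \<in> labels S" "S' = wgraft x B S"
      | (b) "S' \<in># subtrees A" "x \<notin> labels S'"
      | (c) "S' \<in># subtrees B" by blast
    then show "\<exists>a b. labels S' = {a..b}"
    proof cases
      case a
      obtain a b where ab: "labels S = f ` {a..b}" using recA a(1) by blast
      have "x \<in> {a..b}" using a(2) ab unfolding f_def using n1 by (auto split: if_splits)
      then have "labels S' = {a .. b + n - 1}"
        using a(2,3) ab labels_wgraft[OF xB, of S] labels_sub[of _ B] I1[OF n1, of a x b] labB G1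
        unfolding f_def by auto
      then show ?thesis by blast
    next
      case b
      obtain a b where ab: "labels S' = f ` {a..b}" using recA b(1) by blast
      then show ?thesis using I2[OF n1, of x a b] b(2) unfolding f_def by auto
    next
      case c
      obtain a b where ab: "labels S' = g ` {a..b}" using recB c by blast
      then show ?thesis using I3[OF x(1)] unfolding g_def by auto
    qed
  qed
  show ?thesis unfolding R P_def using finR whR LMR' recR by auto
qed



lemma ms12: "mset_set {1..2::nat} = {#1, 2#}"
proof -
  have "{1..2::nat} = {1, 2}" by auto
  then show ?thesis by simp
qed

lemma ms12': "mset_set {Suc 0..2} = {#Suc 0, 2#}" "mset_set {Suc 0..2} = {#2, Suc 0#}"
  using ms12 by (auto simp: add_mset_commute)

lemma sing_int: "\<exists>a b. {c::nat} = {a..b}" by (intro exI[of _ c]) simp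

lemma P_unit: "P 1 A_unit"
  by (simp add: P_def fin_def wh_def LM_Node rec_labelled_def A_unit_def sing_int)

lemma P_mu: "P 2 A_mu"
proof -
  have "{1,2::nat} = {1..2}" by auto
  then show ?thesis by (auto simp: P_def fin_def wh_def LM_Node rec_labelled_def A_mu_def ms12' sing_int)
qed

lemma P_prec: "P 2 A_prec"
proof -
  have "{1,2::nat} = {1..2}" by auto
  then show ?thesis by (auto simp: P_def fin_def wh_def LM_Node rec_labelled_def A_prec_def ms12' sing_int)
qed

lemma P_succ: "P 2 A_succ"
proof -
  have "{1,2::nat} = {1..2}" "{2,1::nat} = {1..2}" by auto
  then show ?thesis by (auto simp: P_def fin_def wh_def LM_Node rec_labelled_def A_succ_def ms12' sing_int)
qed

lemma fwd: "gen_by {(2, A_mu), (2, A_prec), (2, A_succ)} n T \<Longrightarrow> P n T"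
proof (induction rule: gen_by.induct)
  case unit then show ?case by (rule P_unit)
next
  case (gen k T) then show ?case using P_mu P_prec P_succ by auto
next
  case (comp m T1 n T2 x) then show ?case using comp_P by blast
qed



definition dst :: "rwt \<Rightarrow> bool" where "dst T \<longleftrightarrow> (\<forall>z. count (LM T) z \<le> 1)"

lemma P_dst: "P n T \<Longrightarrow> dst T"
  unfolding P_def dst_def by (auto simp: count_mset_set')

lemma kid_props:
  assumes "c \<in># C"
  shows "fin (Node L C) \<Longrightarrow> fin c" "wh (Node L C) \<Longrightarrow> wh c" "dst (Node L C) \<Longrightarrow> dst c"
    "rec_labelled (Node L C) \<Longrightarrow> rec_labelled c"
  using assms count_LM_kid[OF assms] unfolding fin_def wh_def dst_def rec_labelled_def
  by (auto intro: le_trans)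

lemma leaf_char:
  assumes "fin c" "wh c" "dst c" "\<forall>u\<in>labels c. \<forall>v\<in>labels c. u = v" "z \<in> labels c"
  shows "c = Node {z} {#}"
proof (cases c)
  case (Node L' C')
  have ne: "L' \<noteq> {}" using assms(2) Node unfolding wh_def by auto
  have sub: "L' \<subseteq> labels c" using Node by auto
  have "\<forall>w\<in>L'. w = z"
  proof
    fix w assume "w \<in> L'"
    then have "w \<in> labels c" using sub by blast
    then show "w = z" using assms(4) assms(5) by blast
  qed
  then have L': "L' = {z}" using ne by auto
  have "C' = {#}"
  proof (rule ccontr)
    assume "C' \<noteq> {#}"
    then obtain k where k: "k \<in># C'" by blast
    have "lbl k \<noteq> {}" using kid_props(2)[OF k] assms(2) Node subtrees_self[of k] unfolding wh_def by auto
    moreover have "lbl k \<subseteq> labels c" using k Node lbl_sub_labels[of k] by auto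
    ultimately obtain w where "w \<in> lbl k" "w \<in> labels c" by blast
    then have "w = z" using assms(4,5) by blast
    then have "z \<in> labels k" using \<open>w \<in> lbl k\<close> lbl_sub_labels[of k] by blast
    moreover have "z \<notin> labels k"
      by (rule notin_kid_labels[of L' C']) (use assms(1,3) Node L' k in \<open>auto simp: fin_def dst_def\<close>)
    ultimately show False by blast
  qed
  then show ?thesis using Node L' by simp
qed

lemma base_case: assumes "P 1 T" shows "T = A_unit"
proof (cases T)
  case (Node L C)
  have lab: "labels T = {1}" using labels_P[OF assms] by simp
  have "L \<noteq> {}" using assms Node unfolding P_def wh_def by auto
  moreover have "L \<subseteq> {1}" using lab Node by auto
  ultimately have L: "L = {1}" by blast
  have "C = {#}"
  proof (rule ccontr)
    assume "C \<noteq> {#}"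
    then obtain k where k: "k \<in># C" by blast
    have "lbl k \<noteq> {}" using assms k Node subtrees_self[of k] unfolding P_def wh_def by auto
    moreover have "labels k \<subseteq> {1}" using lab Node k by auto
    ultimately have "1 \<in> labels k" using lbl_sub_labels[of k] by blast
    moreover have "1 \<notin> labels k"
      by (rule notin_kid_labels[of L C]) (use assms P_dst[OF assms] Node L k in \<open>auto simp: P_def fin_def dst_def\<close>)
    ultimately show False by blast
  qed
  then show ?thesis using Node L by (simp add: A_unit_def)
qed

lemma discrete_ivt: "Q l \<Longrightarrow> \<not> Q r \<Longrightarrow> l \<le> r \<Longrightarrow> \<exists>y. l \<le> y \<and> y < r \<and> Q y \<and> \<not> Q (Suc y)"
proof (induction r)
  case 0 then show ?case by simp
next
  case (Suc r)
  show ?case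
  proof (cases "Q r")
    case True
    have "l \<noteq> Suc r" using Suc.prems by auto
    then have "l \<le> r" using Suc.prems by simp
    then show ?thesis using True Suc.prems by auto
  next
    case False
    have "l \<noteq> Suc r" using Suc.prems by auto
    then have "l \<le> r" using Suc.prems by simp
    then obtain y where "l \<le> y \<and> y < r \<and> Q y \<and> \<not> Q (Suc y)" using Suc.IH Suc.prems False by blast
    then show ?thesis by auto
  qed
qed

definition witness :: "nat \<Rightarrow> rwt \<Rightarrow> bool" where
  "witness x S0 \<longleftrightarrow> ({x, Suc x} \<subseteq> lbl S0 \<or> (x \<in> lbl S0 \<and> Node {Suc x} {#} \<in># kids S0)
     \<or> (Suc x \<in> lbl S0 \<and> Node {x} {#} \<in># kids S0))"

lemma exist_witness:
  "fin T \<Longrightarrow> wh T \<Longrightarrow> dst T \<Longrightarrow> rec_labelled T \<Longrightarrow> u \<in> labels T \<Longrightarrow> v \<in> labels T \<Longrightarrow> u \<noteq> v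
   \<Longrightarrow> \<exists>x S0. S0 \<in># subtrees T \<and> witness x S0"
proof (induction T arbitrary: u v)
  case (Node L C)
  show ?case
  proof (cases "\<exists>c\<in>#C. \<exists>u\<in>labels c. \<exists>v\<in>labels c. u \<noteq> v")
    case True
    then obtain c u' v' where c: "c \<in># C" "u' \<in> labels c" "v' \<in> labels c" "u' \<noteq> v'" by blast
    then obtain x S0 where "S0 \<in># subtrees c" "witness x S0"
      using Node.IH[OF c(1) _ _ _ _ c(2,3,4)] kid_props[OF c(1)] Node.prems by blast
    then show ?thesis using c(1) by auto
  next
    case False
    have leafs: "c = Node {z} {#}" if "c \<in># C" "z \<in> labels c" for c z
    proof (rule leaf_char)
      show "fin c" "wh c" "dst c" using kid_props[OF that(1)] Node.prems(1-3) by auto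
      show "\<forall>u\<in>labels c. \<forall>v\<in>labels c. u = v" using False that(1) by blast
      show "z \<in> labels c" by (rule that(2))
    qed
    have disjL: "z \<notin> labels c" if "c \<in># C" "z \<in> L" for c z
      using notin_kid_labels[of L C z c] Node.prems(1,3) that unfolding fin_def dst_def by blast
    obtain lo hi where lohi: "labels (Node L C) = {lo..hi}"
      using Node.prems(4) subtrees_self[of "Node L C"] unfolding rec_labelled_def by blast
    have "L \<noteq> {}" using Node.prems(2) unfolding wh_def by auto
    then obtain l where l: "l \<in> L" by blast
    show ?thesis
    proof (cases "C = {#}")
      case True
      then have "L = {lo..hi}" using lohi by simp
      have "lo < hi" using Node.prems(5,6,7) True lohi by auto
      then have "{lo, Suc lo} \<subseteq> L" using \<open>L = {lo..hi}\<close> by auto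
      then have "witness lo (Node L C)" unfolding witness_def by auto
      then show ?thesis using subtrees_self by blast
    next
      case False
      then obtain c0 where c0: "c0 \<in># C" by blast
      have "lbl c0 \<noteq> {}" using Node.prems(2) c0 subtrees_self[of c0] unfolding wh_def by auto
      then obtain a0 where a0: "a0 \<in> labels c0" using lbl_sub_labels[of c0] by blast
      have a0L: "a0 \<notin> L" using disjL c0 a0 by blast
      have inT: "\<And>z. z \<in> {lo..hi} \<Longrightarrow> z \<in> L \<or> (\<exists>c\<in>#C. z \<in> labels c)" using lohi by auto
      have lT: "l \<in> {lo..hi}" and a0T: "a0 \<in> {lo..hi}" using lohi l a0 c0 by auto
      show ?thesis
      proof (cases "l < a0")
        case True
        obtain y where y: "l \<le> y" "y < a0" "y \<in> L" "Suc y \<notin> L"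
          using discrete_ivt[of "\<lambda>z. z \<in> L" l a0] True l a0L by auto
        have "Suc y \<in> {lo..hi}" using y lT a0T by auto
        then obtain c where c: "c \<in># C" "Suc y \<in> labels c" using inT y(4) by blast
        then have "Node {Suc y} {#} \<in># C" using leafs by metis
        then have "witness y (Node L C)" unfolding witness_def using y by auto
        then show ?thesis using subtrees_self by blast
      next
        case False
        then have "a0 < l" using a0L l by (cases "a0 = l") auto
        obtain y where y: "a0 \<le> y" "y < l" "y \<notin> L" "Suc y \<in> L"
          using discrete_ivt[of "\<lambda>z. z \<notin> L" a0 l] \<open>a0 < l\<close> l a0L by auto
        have "y \<in> {lo..hi}" using y lT a0T by auto
        then obtain c where c: "c \<in># C" "y \<in> labels c" using inT y(3) by blast
        then have "Node {y} {#} \<in># C" using leafs by metis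
        then have "witness y (Node L C)" unfolding witness_def using y by auto
        then show ?thesis using subtrees_self by blast
      qed
    qed
  qed
qed



primrec prune :: "nat \<Rightarrow> rwt \<Rightarrow> rwt" where
  "prune r (Node L C) = Node (L - {r}) (filter_mset (\<lambda>c. c \<noteq> Node {} {#}) (image_mset (prune r) C))"

lemma prune_id: "r \<notin> labels T \<Longrightarrow> wh T \<Longrightarrow> prune r T = T"
proof (induction T)
  case (Node L C)
  have IH: "\<And>c. c \<in># C \<Longrightarrow> prune r c = c" using Node kid_props by auto
  then have "image_mset (prune r) C = C"
    by (auto intro: image_mset_cong[where g=id, simplified])
  moreover have "\<And>c. c \<in># C \<Longrightarrow> c \<noteq> Node {} {#}"
    using Node.prems(2) unfolding wh_def by fastforce
  ultimately have "filter_mset (\<lambda>c. c \<noteq> Node {} {#}) (image_mset (prune r) C) = C"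
    by (auto simp: filter_mset_eq_conv)
  then show ?case using Node.prems by auto
qed

lemma lbl_prune[simp]: "lbl (prune r T) = lbl T - {r}" by (cases T) auto

lemma labels_filter_empty:
  "(\<Union>c\<in>set_mset (filter_mset (\<lambda>c. c \<noteq> Node {} {#}) M). labels c) = (\<Union>c\<in>set_mset M. labels c)"
proof
  show "(\<Union>c\<in>set_mset (filter_mset (\<lambda>c. c \<noteq> Node {} {#}) M). labels c) \<subseteq> (\<Union>c\<in>set_mset M. labels c)"
    by auto
  show "(\<Union>c\<in>set_mset M. labels c) \<subseteq> (\<Union>c\<in>set_mset (filter_mset (\<lambda>c. c \<noteq> Node {} {#}) M). labels c)"
  proof
    fix y assume "y \<in> (\<Union>c\<in>set_mset M. labels c)"
    then obtain c where c: "c \<in># M" "y \<in> labels c" by blast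
    then have "c \<noteq> Node {} {#}" by auto
    then show "y \<in> (\<Union>c\<in>set_mset (filter_mset (\<lambda>c. c \<noteq> Node {} {#}) M). labels c)" using c by auto
  qed
qed

lemma labels_prune: "labels (prune r T) = labels T - {r}"
proof (induction T)
  case (Node L C)
  have "labels (prune r (Node L C)) = (L - {r}) \<union> (\<Union>c\<in>set_mset (image_mset (prune r) C). labels c)"
    using labels_filter_empty[of "image_mset (prune r) C"] by simp
  also have "\<dots> = (L - {r}) \<union> (\<Union>c\<in>set_mset C. labels c - {r})" using Node.IH by simp
  also have "\<dots> = (L \<union> (\<Union>c\<in>set_mset C. labels c)) - {r}" by blast
  finally show ?case by simp
qed

lemma filter_Sum: "filter_mset Q (\<Sum>\<^sub># M) = \<Sum>\<^sub># (image_mset (filter_mset Q) M)"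
  by (induction M) auto

lemma Sum_LM_filter_empty:
  "\<Sum>\<^sub># (image_mset LM (filter_mset (\<lambda>c. c \<noteq> Node {} {#}) M)) = \<Sum>\<^sub># (image_mset LM M)"
proof (induction M)
  case empty then show ?case by simp
next
  case (add c M) then show ?case by (auto simp: LM_Node)
qed

lemma LM_prune: "fin T \<Longrightarrow> LM (prune r T) = filter_mset (\<lambda>z. z \<noteq> r) (LM T)"
proof (induction T)
  case (Node L C)
  have fL: "finite L" using Node.prems unfolding fin_def by auto
  have IH: "LM (prune r c) = filter_mset (\<lambda>z. z \<noteq> r) (LM c)" if c: "c \<in># C" for c
    using Node.IH[OF c kid_props(1)[OF c Node.prems]] .
  have "LM (prune r (Node L C)) = mset_set (L - {r}) + \<Sum>\<^sub># (image_mset LM (image_mset (prune r) C))"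
    by (simp add: LM_Node Sum_LM_filter_empty)
  also have "image_mset LM (image_mset (prune r) C) = image_mset (\<lambda>c. filter_mset (\<lambda>z. z \<noteq> r) (LM c)) C"
    using IH by (auto simp: image_mset.compositionality intro!: image_mset_cong)
  moreover have "L - {r} = {x \<in> L. x \<noteq> r}" by auto
  ultimately show ?case using fL
    by (simp add: LM_Node filter_Sum image_mset.compositionality comp_def)
qed

lemma sub_prune: "S' \<in># subtrees (prune r T) \<Longrightarrow> \<exists>S\<in>#subtrees T. S' = prune r S"
proof (induction T arbitrary: S')
  case (Node L C)
  show ?case
  proof (cases "S' = prune r (Node L C)")
    case True then show ?thesis using Node.prems subtrees_self by blast
  next
    case False
    then obtain c where c: "c \<in># C" "S' \<in># subtrees (prune r c)"
      using Node.prems by auto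
    then show ?thesis using Node.IH[OF c(1) c(2)] by auto
  qed
qed

lemma sub_prune_ne: "S' \<in># subtrees (prune r T) \<Longrightarrow> S' \<noteq> prune r T \<Longrightarrow> S' \<noteq> Node {} {#}"
proof (induction T arbitrary: S')
  case (Node L C)
  obtain c where c: "c \<in># C" "prune r c \<noteq> Node {} {#}" "S' \<in># subtrees (prune r c)"
    using Node.prems by auto
  show ?case
  proof (cases "S' = prune r c")
    case True then show ?thesis using c by simp
  next
    case False then show ?thesis using Node.IH[OF c(1) c(3)] by simp
  qed
qed

lemma fin_prune: "fin T \<Longrightarrow> fin (prune r T)"
  unfolding fin_def
proof
  fix S' assume "\<forall>S\<in>#subtrees T. finite (lbl S)" "S' \<in># subtrees (prune r T)"
  then show "finite (lbl S')" using sub_prune[of S' r T] by auto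
qed



lemma I4a:
  fixes x r a b :: nat
  assumes "r = Suc x \<or> r = x" "r \<in> {a..b}" "1 \<le> x"
  shows "(\<lambda>y. if y \<le> x then y else y - 1) ` ({a..b} - {r}) = {a..b-1}"
  (is "?h ` _ = _")
proof
  show "?h ` ({a..b} - {r}) \<subseteq> {a..b-1}" using assms by auto
  show "{a..b-1} \<subseteq> ?h ` ({a..b} - {r})"
  proof
    fix z assume z: "z \<in> {a..b-1}"
    show "z \<in> ?h ` ({a..b} - {r})"
    proof (cases "z < r")
      case True
      then show ?thesis using z assms by (intro image_eqI[of _ _ z]) auto
    next
      case False
      then show ?thesis using z assms by (intro image_eqI[of _ _ "Suc z"]) auto
    qed
  qed
qed

lemma I4b:
  fixes x r a b :: nat
  assumes "r = Suc x \<or> r = x" "r \<notin> {a..b}"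
  shows "\<exists>a' b'. (\<lambda>y. if y \<le> x then y else y - 1) ` ({a..b} - {r}) = {a'..b'}"
proof -
  have e: "{a..b} - {r} = {a..b}" using assms by auto
  consider "b \<le> x" | "x < a" "a \<le> b" | "a \<le> x" "x < b" | "b < a" by linarith
  then show ?thesis
  proof cases
    case 1
    then have "(\<lambda>y. if y \<le> x then y else y - 1) ` {a..b} = {a..b}" by (auto intro!: image_eqI)
    then show ?thesis using e by metis
  next
    case 2
    have "(\<lambda>y. if y \<le> x then y else y - 1) ` {a..b} = {a-1..b-1}"
    proof
      show "(\<lambda>y. if y \<le> x then y else y - 1) ` {a..b} \<subseteq> {a-1..b-1}" using 2 by auto
      show "{a-1..b-1} \<subseteq> (\<lambda>y. if y \<le> x then y else y - 1) ` {a..b}"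
      proof
        fix z assume "z \<in> {a-1..b-1}"
        then show "z \<in> (\<lambda>y. if y \<le> x then y else y - 1) ` {a..b}"
          using 2 by (intro image_eqI[of _ _ "Suc z"]) auto
      qed
    qed
    then show ?thesis using e by metis
  next
    case 3 then show ?thesis using assms by auto
  next
    case 4 then show ?thesis by (intro exI[of _ 1] exI[of _ 0]) auto
  qed
qed

lemma shrink_P:
  assumes PT: "P n T" and r: "r = Suc x \<or> r = x" and x: "1 \<le> x" "Suc x \<le> n"
    and leafs: "\<forall>S\<in>#subtrees T. lbl S = {r} \<longrightarrow> S = Node {r} {#}" and nl: "T \<noteq> Node {r} {#}"
  shows "P (n - 1) (relabel (\<lambda>y. if y \<le> x then y else y - 1) (prune r T))"
proof -
  define h where "h = (\<lambda>y::nat. if y \<le> x then y else y - 1)"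
  have fT: "fin T" using PT unfolding P_def by auto
  have fP: "fin (prune r T)" using fin_prune[OF fT] .
  have rin: "r \<in> {1..n}" using r x by auto
  have labT: "labels T = {1..n}" using labels_P[OF PT] .
  have labP: "labels (prune r T) = {1..n} - {r}" using labT labels_prune by simp
  have inj: "inj_on h ({1..n} - {r})" unfolding h_def inj_on_def using r by auto
  have "LM (relabel h (prune r T)) = image_mset h (LM (prune r T))"
    by (rule LM_relabel) (use inj labP fP in \<open>auto simp: fin_def\<close>)
  also have "\<dots> = image_mset h (filter_mset (\<lambda>z. z \<noteq> r) (mset_set {1..n}))"
    using LM_prune[OF fT] PT unfolding P_def by simp
  also have "filter_mset (\<lambda>z. z \<noteq> r) (mset_set {1..n}) = mset_set ({1..n} - {r})"
    by (simp add: set_diff_eq)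
  also have "image_mset h (mset_set ({1..n} - {r})) = mset_set (h ` ({1..n} - {r}))"
    using inj by (simp add: image_mset_mset_set)
  also have "h ` ({1..n} - {r}) = {1..n-1}" unfolding h_def using I4a[OF r rin x(1)] by simp
  finally have LM1: "LM (relabel h (prune r T)) = mset_set {1..n - 1}" .
  have fin1: "fin (relabel h (prune r T))" using fP unfolding fin_def by (auto simp: subtrees_relabel)
  have wh1: "wh (relabel h (prune r T))" unfolding wh_def
  proof
    fix S' assume "S' \<in># subtrees (relabel h (prune r T))"
    then obtain S1 where S1: "S1 \<in># subtrees (prune r T)" "S' = relabel h S1" by (auto simp: subtrees_relabel)
    obtain S where S: "S \<in># subtrees T" "S1 = prune r S" using sub_prune[OF S1(1)] by blast
    have "lbl S \<noteq> {}" using PT S(1) unfolding P_def wh_def by auto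
    have "lbl S1 \<noteq> {}"
    proof (cases "S1 = prune r T")
      case True
      have "lbl T \<noteq> {}" using PT subtrees_self[of T] unfolding P_def wh_def by auto
      then have "lbl T - {r} \<noteq> {}" using leafs nl subtrees_self[of T] by blast
      then show ?thesis using True by simp
    next
      case False
      then have ne: "S1 \<noteq> Node {} {#}" using sub_prune_ne[OF S1(1)] by blast
      show ?thesis
      proof
        assume "lbl S1 = {}"
        then have "lbl S = {r}" using S(2) \<open>lbl S \<noteq> {}\<close> by auto
        then have "S = Node {r} {#}" using leafs S(1) by blast
        then show False using ne S(2) by simp
      qed
    qed
    then show "lbl S' \<noteq> {}" using S1 by simp
  qed
  have rec1: "rec_labelled (relabel h (prune r T))" unfolding rec_labelled_def
  proof
    fix S' assume "S' \<in># subtrees (relabel h (prune r T))"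
    then obtain S1 where S1: "S1 \<in># subtrees (prune r T)" "S' = relabel h S1" by (auto simp: subtrees_relabel)
    obtain S where S: "S \<in># subtrees T" "S1 = prune r S" using sub_prune[OF S1(1)] by blast
    obtain a b where ab: "labels S = {a..b}" using PT S(1) unfolding P_def rec_labelled_def by blast
    have "labels S' = h ` ({a..b} - {r})" using S S1 ab labels_prune by simp
    then show "\<exists>a b. labels S' = {a..b}"
      using I4a[OF r _ x(1), of a b] I4b[OF r, of a b] unfolding h_def by (cases "r \<in> {a..b}") auto
  qed
  show ?thesis using LM1 fin1 wh1 rec1 unfolding P_def h_def by simp
qed



lemma other_kid:
  assumes f: "fin (Node L C)" and d: "dst (Node L C)" and C: "C = add_mset c0 C'"
    and z: "z \<in> labels c0" and c: "c \<in># C'"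
  shows "z \<notin> labels c"
proof
  assume zc: "z \<in> labels c"
  have "1 \<le> count (LM c0) z" using in_labels_LM[of c0 z] kid_props(1)[of c0 C L] f C z by (auto simp: fin_def)
  moreover have "1 \<le> count (LM c) z" using in_labels_LM[of c z] kid_props(1)[of c C L] f C c zc by (auto simp: fin_def)
  moreover have "count (LM c) z \<le> (\<Sum>c\<in>#C'. count (LM c) z)" using sum_mset_member_le[OF c] .
  moreover have "count (LM (Node L C)) z = count (mset_set L) z + (count (LM c0) z + (\<Sum>c\<in>#C'. count (LM c) z))"
    using C by (simp add: count_LM_Node)
  moreover have "count (LM (Node L C)) z \<le> 1" using d unfolding dst_def by blast
  ultimately show False by linarith
qed

lemma recon_gen:
  assumes "fin T" "dst T" "wh T" "S0 \<in># subtrees T" "x \<in> labels S0" "Suc x \<in> labels S0"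
    "\<forall>y. y \<noteq> Suc x \<longrightarrow> k y = y" "r = Suc x \<or> r = x"
    "wgraft x G (relabel k (prune r S0)) = S0"
  shows "wgraft x G (relabel k (prune r T)) = T"
  using assms
proof (induction T)
  case (Node L C)
  show ?case
  proof (cases "S0 = Node L C")
    case True then show ?thesis using Node.prems by simp
  next
    case False
    then obtain c0 where c0: "c0 \<in># C" "S0 \<in># subtrees c0" using Node.prems(4) by auto
    obtain C' where C': "C = add_mset c0 C'" using c0 by (metis multi_member_split)
    have lx: "x \<in> labels c0" "Suc x \<in> labels c0" using labels_sub[OF c0(2)] Node.prems(5,6) by auto
    have nL: "x \<notin> L" "Suc x \<notin> L"
      using notin_kid_labels[of L C _ c0] lx Node.prems(1,2) c0(1) unfolding fin_def dst_def by blast+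
    have oth: "\<And>c. c \<in># C' \<Longrightarrow> x \<notin> labels c \<and> Suc x \<notin> labels c"
      using other_kid[OF Node.prems(1,2) C'] lx by blast
    have rc: "\<And>c. c \<in># C' \<Longrightarrow> r \<notin> labels c" using oth Node.prems(8) by blast
    have whC: "wh c" if "c \<in># C" for c using kid_props(2)[OF that Node.prems(3)] .
    have pr: "image_mset (prune r) C' = C'"
    proof -
      have "prune r c = c" if "c \<in># C'" for c
        using prune_id[OF rc[OF that] whC] that C' by simp
      then show ?thesis by (auto intro: image_mset_cong[where g=id, simplified])
    qed
    have c0ne: "prune r c0 \<noteq> Node {} {#}"
    proof
      assume "prune r c0 = Node {} {#}"
      then have "labels (prune r c0) = {}" by simp
      then show False using labels_prune[of r c0] lx Node.prems(8) by auto
    qed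
    have ne: "c \<noteq> Node {} {#}" if "c \<in># C'" for c
      using whC[of c] that C' subtrees_self[of c] unfolding wh_def by auto
    have filt: "filter_mset (\<lambda>c. c \<noteq> Node {} {#}) (image_mset (prune r) C) = image_mset (prune r) C"
      using C' pr c0ne ne by (auto simp: filter_mset_eq_conv)
    have rl: "image_mset (relabel k) C' = C'"
    proof -
      have "relabel k c = c" if "c \<in># C'" for c
      proof (rule relabel_id)
        show "\<forall>y\<in>labels c. k y = y" using oth[OF that] Node.prems(7) by metis
      qed
      then show ?thesis by (auto intro: image_mset_cong[where g=id, simplified])
    qed
    have wg: "image_mset (wgraft x G) C' = C'" using oth wgraft_id
      by (auto intro: image_mset_cong[where g=id, simplified])
    have kL: "k ` L = L"
    proof -
      have "\<forall>y\<in>L. k y = y" using nL Node.prems(7) by metis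
      then show ?thesis by simp
    qed
    have IH: "wgraft x G (relabel k (prune r c0)) = c0"
      by (rule Node.IH[OF c0(1) kid_props(1)[OF c0(1) Node.prems(1)] kid_props(3)[OF c0(1) Node.prems(2)]
            kid_props(2)[OF c0(1) Node.prems(3)] c0(2) Node.prems(5-9)])
    have rL: "L - {r} = L" using nL Node.prems(8) by auto
    have "prune r (Node L C) = Node L (add_mset (prune r c0) C')" using filt C' pr rL by simp
    then show ?thesis using C' rl wg kL IH nL by simp
  qed
qed



lemma sub_props:
  assumes "S \<in># subtrees T"
  shows "fin T \<Longrightarrow> fin S" "wh T \<Longrightarrow> wh S" "dst T \<Longrightarrow> dst S"
  using assms subtrees_trans[OF assms] count_LM_sub[OF assms] unfolding fin_def wh_def dst_def
  by (auto intro: le_trans)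

lemma uniq:
  "fin T \<Longrightarrow> dst T \<Longrightarrow> S \<in># subtrees T \<Longrightarrow> S' \<in># subtrees T \<Longrightarrow> z \<in> lbl S \<Longrightarrow> z \<in> lbl S' \<Longrightarrow> S = S'"
proof (induction T arbitrary: S S')
  case (Node L C)
  have fL: "\<forall>S\<in>#subtrees (Node L C). finite (lbl S)" using Node.prems(1) unfolding fin_def .
  have dL: "count (LM (Node L C)) z \<le> 1" using Node.prems(2) unfolding dst_def by blast
  have inkid: "z \<in> labels c" if "c \<in># C" "U \<in># subtrees c" "z \<in> lbl U" for c U
    using labels_sub[OF that(2)] lbl_sub_labels[of U] that(3) by blast
  show ?case
  proof (cases "S = Node L C")
    case True
    show ?thesis
    proof (rule ccontr)
      assume "S \<noteq> S'"
      then obtain c where c: "c \<in># C" "S' \<in># subtrees c" using Node.prems(4) True by auto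
      have "z \<in> L" using True Node.prems(5) by simp
      then show False using notin_kid_labels[OF fL dL _ c(1)] inkid[OF c Node.prems(6)] by blast
    qed
  next
    case False
    then obtain c1 where c1: "c1 \<in># C" "S \<in># subtrees c1" using Node.prems(3) by auto
    show ?thesis
    proof (cases "S' = Node L C")
      case True
      have "z \<in> L" using True Node.prems(6) by simp
      then show ?thesis using notin_kid_labels[OF fL dL _ c1(1)] inkid[OF c1 Node.prems(5)] by blast
    next
      case False
      then obtain c2 where c2: "c2 \<in># C" "S' \<in># subtrees c2" using Node.prems(4) by auto
      obtain C' where C': "C = add_mset c1 C'" using c1 by (metis multi_member_split)
      show ?thesis
      proof (cases "c2 \<in># C'")
        case True
        then show ?thesis using other_kid[OF Node.prems(1,2) C' inkid[OF c1 Node.prems(5)] True]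
            inkid[OF c2 Node.prems(6)] by blast
      next
        case False
        then have "c2 = c1" using c2(1) C' by auto
        then show ?thesis using Node.IH[OF c1(1) kid_props(1)[OF c1(1) Node.prems(1)]
            kid_props(3)[OF c1(1) Node.prems(2)] c1(2) _ Node.prems(5,6)] c2(2) by blast
      qed
    qed
  qed
qed

lemma wh_kid_ne: "wh (Node L C) \<Longrightarrow> c \<in># C \<Longrightarrow> c \<noteq> Node {} {#}"
  unfolding wh_def by fastforce

lemma mu_root:
  assumes "fin S0" "dst S0" "wh S0" "x \<in> lbl S0" "Suc x \<in> lbl S0"
  shows "wgraft x (Node {x, Suc x} {#}) (relabel (\<lambda>y. y) (prune (Suc x) S0)) = S0"
proof (cases S0)
  case (Node L C)
  have fL: "\<forall>S\<in>#subtrees (Node L C). finite (lbl S)" using assms(1) Node unfolding fin_def by simp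
  have dL: "count (LM (Node L C)) (Suc x) \<le> 1" using assms(2) Node unfolding dst_def by blast
  have pc: "prune (Suc x) c = c" if "c \<in># C" for c
  proof (rule prune_id)
    show "Suc x \<notin> labels c" using notin_kid_labels[OF fL dL _ that] assms(5) Node by simp
    show "wh c" using kid_props(2)[OF that] assms(3) Node by simp
  qed
  then have "image_mset (prune (Suc x)) C = C" by (auto intro: image_mset_cong[where g=id, simplified])
  moreover have "filter_mset (\<lambda>c. c \<noteq> Node {} {#}) C = C"
    using wh_kid_ne[of L C] assms(3) Node by (auto simp: filter_mset_eq_conv)
  ultimately have "prune (Suc x) S0 = Node (L - {Suc x}) C" using Node by simp
  moreover have "relabel (\<lambda>y. y) (Node (L - {Suc x}) C) = Node (L - {Suc x}) C" by (rule relabel_id) simp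
  moreover have "(L - {Suc x} - {x}) \<union> {x, Suc x} = L" using assms(4,5) Node by auto
  ultimately show ?thesis using Node assms(4) by simp
qed

lemma prec_root:
  assumes "fin S0" "dst S0" "wh S0" "x \<in> lbl S0" "Node {Suc x} {#} \<in># kids S0"
  shows "wgraft x (Node {x} {# Node {Suc x} {#} #}) (relabel (\<lambda>y. y) (prune (Suc x) S0)) = S0"
proof (cases S0)
  case (Node L C)
  obtain C' where C': "C = add_mset (Node {Suc x} {#}) C'" using assms(5) Node by (metis multi_member_split rwt.sel(2))
  have fL: "fin (Node L C)" "dst (Node L C)" "wh (Node L C)" using assms(1-3) Node by auto
  have oth: "Suc x \<notin> labels c" if "c \<in># C'" for c
    using other_kid[OF fL(1,2) C' _ that] by simp
  have pc: "prune (Suc x) c = c" if "c \<in># C'" for c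
  proof (rule prune_id)
    show "Suc x \<notin> labels c" using oth[OF that] .
    show "wh c" using kid_props(2)[of c C L] fL(3) that C' by simp
  qed
  then have "image_mset (prune (Suc x)) C' = C'" by (auto intro: image_mset_cong[where g=id, simplified])
  moreover have "filter_mset (\<lambda>c. c \<noteq> Node {} {#}) C' = C'"
    using wh_kid_ne[of L C] fL(3) C' by (auto simp: filter_mset_eq_conv)
  moreover have "Suc x \<notin> L"
    using notin_kid_labels[of L C "Suc x" "Node {Suc x} {#}"] fL(1,2) C' unfolding fin_def dst_def by auto
  ultimately have "prune (Suc x) S0 = Node L C'" using Node C' by simp
  moreover have "relabel (\<lambda>y. y) (Node L C') = Node L C'" by (rule relabel_id) simp
  moreover have "(L - {x}) \<union> {x} = L" using assms(4) Node by auto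
  ultimately show ?thesis using Node assms(4) C' by simp
qed

lemma succ_root:
  assumes "fin S0" "dst S0" "wh S0" "Suc x \<in> lbl S0" "Node {x} {#} \<in># kids S0"
  shows "wgraft x (Node {Suc x} {# Node {x} {#} #}) (relabel (\<lambda>y. if y = Suc x then x else y) (prune x S0)) = S0"
proof (cases S0)
  case (Node L C)
  define k where "k = (\<lambda>y. if y = Suc x then x else y)"
  obtain C' where C': "C = add_mset (Node {x} {#}) C'" using assms(5) Node by (metis multi_member_split rwt.sel(2))
  have fL: "fin (Node L C)" "dst (Node L C)" "wh (Node L C)" using assms(1-3) Node by auto
  have oth: "x \<notin> labels c" if "c \<in># C'" for c
    using other_kid[OF fL(1,2) C' _ that] by simp
  have oth2: "Suc x \<notin> labels c" if "c \<in># C'" for c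
    using notin_kid_labels[of L C "Suc x" c] fL(1,2) C' that assms(4) Node unfolding fin_def dst_def by auto
  have pc: "prune x c = c" if "c \<in># C'" for c
  proof (rule prune_id)
    show "x \<notin> labels c" using oth[OF that] .
    show "wh c" using kid_props(2)[of c C L] fL(3) that C' by simp
  qed
  then have "image_mset (prune x) C' = C'" by (auto intro: image_mset_cong[where g=id, simplified])
  moreover have "filter_mset (\<lambda>c. c \<noteq> Node {} {#}) C' = C'"
    using wh_kid_ne[of L C] fL(3) C' by (auto simp: filter_mset_eq_conv)
  moreover have xL: "x \<notin> L"
    using notin_kid_labels[of L C x "Node {x} {#}"] fL(1,2) C' unfolding fin_def dst_def by auto
  ultimately have "prune x S0 = Node L C'" using Node C' by simp
  moreover have "image_mset (relabel k) C' = C'"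
  proof -
    have "relabel k c = c" if "c \<in># C'" for c
      by (rule relabel_id) (use oth2[OF that] in \<open>auto simp: k_def\<close>)
    then show ?thesis by (auto intro: image_mset_cong[where g=id, simplified])
  qed
  moreover have "k ` L = (L - {Suc x}) \<union> {x}" using assms(4) Node unfolding k_def by auto
  moreover have "((L - {Suc x}) \<union> {x} - {x}) \<union> {Suc x} = L" using assms(4) Node xL by auto
  ultimately show ?thesis using Node C' unfolding k_def[symmetric] by simp
qed



abbreviation "GG \<equiv> {(2::nat, A_mu), (2, A_prec), (2, A_succ)}"

lemma decomp:
  assumes PT: "P n T" and n2: "2 \<le> n"
    and IH: "\<And>T1. P (n - 1) T1 \<Longrightarrow> gen_by GG (n - 1) T1"
  shows "gen_by GG n T"
proof -
  have fT: "fin T" and wT: "wh T" and dT: "dst T" and rT: "rec_labelled T"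
    using PT P_dst[OF PT] unfolding P_def by auto
  have labT: "labels T = {1..n}" using labels_P[OF PT] .
  obtain x S0 where S0: "S0 \<in># subtrees T" "witness x S0"
    using exist_witness[OF fT wT dT rT, of 1 2] labT n2 by auto
  have fS: "fin S0" "wh S0" "dst S0" using sub_props[OF S0(1)] fT wT dT by auto
  have xin: "x \<in> labels S0" "Suc x \<in> labels S0"
    using S0(2) lbl_sub_labels[of S0] unfolding witness_def
    by (cases S0; auto)+
  then have "x \<in> {1..n}" "Suc x \<in> {1..n}" using labels_sub[OF S0(1)] labT by auto
  then have x1: "1 \<le> x" and xn: "Suc x \<le> n" by auto
  define h where "h = (\<lambda>y::nat. if y \<le> x then y else y - 1)"
  define f where "f = (\<lambda>y::nat. if x < y then y + 2 - 1 else y)"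
  define g where "g = (\<lambda>y::nat. y + x - 1)"
  have nl: "T \<noteq> Node {r} {#}" for r
  proof
    assume "T = Node {r} {#}"
    then have "labels T = {r}" by simp
    moreover have "1 \<in> labels T" "2 \<in> labels T" using labT n2 by auto
    ultimately show False by auto
  qed
  have key: "gen_by GG n T" if r: "r = Suc x \<or> r = x" and G: "(2, G) \<in> GG"
    and leafs: "\<forall>S\<in>#subtrees T. lbl S = {r} \<longrightarrow> S = Node {r} {#}"
    and k: "\<forall>y. y \<noteq> Suc x \<longrightarrow> k y = y" and kf: "\<forall>y. y \<noteq> r \<longrightarrow> f (h y) = k y"
    and lG: "lbl G \<noteq> {}"
    and root: "wgraft x (relabel g G) (relabel k (prune r S0)) = S0"
    for r G k
  proof -
    define T1 where "T1 = relabel h (prune r T)"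
    have P1: "P (n - 1) T1" unfolding T1_def h_def by (rule shrink_P[OF PT r x1 xn leafs nl])
    have g1: "gen_by GG (n - 1) T1" by (rule IH[OF P1])
    have g2: "gen_by GG 2 G" using G by (rule gen_by.gen)
    have "gen_by GG (n - 1 + 2 - 1) (rw_comp 2 x T1 G)"
      by (rule gen_by.comp[OF g1 g2 x1]) (use xn in simp)
    moreover have "n - 1 + 2 - 1 = n" using n2 by simp
    moreover have "rw_comp 2 x T1 G = T"
    proof -
      have "rw_comp 2 x T1 G = wgraft x (relabel g G) (relabel f T1)"
        unfolding f_def g_def by (rule rw_comp_w[OF lG])
      also have "relabel f T1 = relabel (f \<circ> h) (prune r T)" unfolding T1_def by (rule relabel_comp)
      also have "\<dots> = relabel k (prune r T)"
        by (rule relabel_cong) (use kf labels_prune[of r T] in auto)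
      also have "wgraft x (relabel g G) (relabel k (prune r T)) = T"
        by (rule recon_gen[OF fT dT wT S0(1) xin k r root])
      finally show ?thesis .
    qed
    ultimately show ?thesis by simp
  qed
  have eq_gx: "g ` {1, 2} = {x, Suc x}" "g 1 = x" "g 2 = Suc x" unfolding g_def by auto
  consider (mu) "{x, Suc x} \<subseteq> lbl S0" | (prec) "x \<in> lbl S0" "Node {Suc x} {#} \<in># kids S0"
    | (succ) "Suc x \<in> lbl S0" "Node {x} {#} \<in># kids S0"
    using S0(2) unfolding witness_def by blast
  then show ?thesis
  proof cases
    case mu
    show ?thesis
    proof (rule key[of "Suc x" A_mu "\<lambda>y. y"])
      show "\<forall>S\<in>#subtrees T. lbl S = {Suc x} \<longrightarrow> S = Node {Suc x} {#}"
      proof (intro ballI impI)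
        fix S assume "S \<in># subtrees T" "lbl S = {Suc x}"
        then have "S = S0" using uniq[OF fT dT _ S0(1), of S "Suc x"] mu by auto
        then show "S = Node {Suc x} {#}" using mu \<open>lbl S = {Suc x}\<close> by auto
      qed
      show "\<forall>y. y \<noteq> Suc (x) \<longrightarrow> f (h y) = y" unfolding f_def h_def by auto
      show "wgraft x (relabel g A_mu) (relabel (\<lambda>y. y) (prune (Suc x) S0)) = S0"
        using mu_root[OF fS(1,3,2)] mu eq_gx by (simp add: A_mu_def)
    qed (auto simp: A_mu_def)
  next
    case prec
    have lf: "Node {Suc x} {#} \<in># subtrees T"
      using subtrees_trans[OF S0(1)] prec(2) subtrees_kid[of _ S0] subtrees_self by blast
    show ?thesis
    proof (rule key[of "Suc x" A_prec "\<lambda>y. y"])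
      show "\<forall>S\<in>#subtrees T. lbl S = {Suc x} \<longrightarrow> S = Node {Suc x} {#}"
      proof (intro ballI impI)
        fix S assume "S \<in># subtrees T" "lbl S = {Suc x}"
        then show "S = Node {Suc x} {#}" using uniq[OF fT dT _ lf, of S "Suc x"] by auto
      qed
      show "\<forall>y. y \<noteq> Suc (x) \<longrightarrow> f (h y) = y" unfolding f_def h_def by auto
      show "wgraft x (relabel g A_prec) (relabel (\<lambda>y. y) (prune (Suc x) S0)) = S0"
        using prec_root[OF fS(1,3,2) prec] eq_gx by (simp add: A_prec_def)
    qed (auto simp: A_prec_def)
  next
    case succ
    have lf: "Node {x} {#} \<in># subtrees T"
      using subtrees_trans[OF S0(1)] succ(2) subtrees_kid[of _ S0] subtrees_self by blast
    show ?thesis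
    proof (rule key[of x A_succ "\<lambda>y. if y = Suc x then x else y"])
      show "\<forall>S\<in>#subtrees T. lbl S = {x} \<longrightarrow> S = Node {x} {#}"
      proof (intro ballI impI)
        fix S assume "S \<in># subtrees T" "lbl S = {x}"
        then show "S = Node {x} {#}" using uniq[OF fT dT _ lf, of S x] by auto
      qed
      show "\<forall>y. y \<noteq> x \<longrightarrow> f (h y) = (if y = Suc x then x else y)" unfolding f_def h_def by auto
      show "wgraft x (relabel g A_succ) (relabel (\<lambda>y. if y = Suc x then x else y) (prune x S0)) = S0"
        using succ_root[OF fS(1,3,2) succ] eq_gx by (simp add: A_succ_def)
    qed (auto simp: A_succ_def)
  qed
qed

lemma bwd: "P n T \<Longrightarrow> gen_by GG n T"
proof (induction n arbitrary: T rule: less_induct)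
  case (less n)
  show ?case
  proof (cases "n \<le> 1")
    case True
    then have "n = 1" using P_pos[OF less.prems] by simp
    then show ?thesis using base_case less.prems gen_by.unit by blast
  next
    case False
    then show ?thesis using decomp[OF less.prems] less.IH by simp
  qed
qed

theorem mainTheorem10:
  "gen_by {(2, A_mu), (2, A_prec), (2, A_succ)} n T \<longleftrightarrow>
     (T \<in> RW n \<and> rec_labelled T \<and> (\<forall>S \<in># subtrees T. lbl S \<noteq> {}))"
  using fwd bwd P_iff by blast


end
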